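(* Let $n\geq 2$, $p\geq 1$, and $$\Omega=\{(x',x_n)\in\mathbb R^{n-1}\times\mathbb R: |x'|<1,\ 0<x_n<1-|x'|^2\}.$$ Then there is a constant $C>0$ depending only on $n,p$ such that the function $$w(x',x_n)=Cx_n-Cx_n^{\frac{2}{n+p}}(1-|x'|^2)^{\frac{n+p-2}{n+p}}$$ is smooth and convex in $\Omega$ and satisfies $\det D^2 w\leq |w|^{-p}$ in $\Omega$ and $w=0$ on $\partial\Omega$. *)

theory Defs
  imports "HOL-Analysis.Analysis"
begin

text \<open>Points of R^n = R^(n-1) x R are modelled as vectors indexed by the
  finite type 'n + unit; Inl i are the first n-1 coordinates (x'),
  Inr () is the last coordinate x_n.  Hence n = CARD('n) + 1 \<ge> 2.\<close>

definition xprime :: "real ^ ('n::finite + unit) \<Rightarrow> real ^ 'n" where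
  "xprime x = (\<chi> i. x $ Inl i)"

definition xlast :: "real ^ ('n::finite + unit) \<Rightarrow> real" where
  "xlast x = x $ Inr ()"

fun Ck_on :: "nat \<Rightarrow> (real ^ 'm::finite) set \<Rightarrow> (real ^ 'm \<Rightarrow> real) \<Rightarrow> bool" where
  "Ck_on 0 S f = continuous_on S f"
| "Ck_on (Suc k) S f = (f differentiable_on S \<and>
     (\<forall>i. Ck_on k S (\<lambda>x. frechet_derivative f (at x) (axis i 1))))"

definition smooth_on :: "(real ^ 'm::finite) set \<Rightarrow> (real ^ 'm \<Rightarrow> real) \<Rightarrow> bool" where
  "smooth_on S f = (\<forall>k. Ck_on k S f)"

definition hessian :: "(real ^ 'm::finite \<Rightarrow> real) \<Rightarrow> real ^ 'm \<Rightarrow> real ^ 'm ^ 'm" where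
  "hessian f x = (\<chi> i j. frechet_derivative (\<lambda>y. frechet_derivative f (at y) (axis j 1)) (at x) (axis i 1))"

definition Omega :: "(real ^ ('n::finite + unit)) set" where
  "Omega = {x. norm (xprime x) < 1 \<and> 0 < xlast x \<and> xlast x < 1 - (norm (xprime x))\<^sup>2}"

end

theory Submission
  imports Defs
begin


lemma bl_xprime: "bounded_linear (xprime :: real^('n::finite+unit) \<Rightarrow> real^'n)"
proof -
  have "linear (xprime :: real^('n::finite+unit) \<Rightarrow> real^'n)"
    by (rule linearI) (auto simp: xprime_def vec_eq_iff)
  then show ?thesis by (simp add: linear_conv_bounded_linear)
qed

lemma bl_xlast: "bounded_linear (xlast :: real^('n::finite+unit) \<Rightarrow> real)"
  unfolding xlast_def[abs_def] by (rule bounded_linear_vec_nth)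

lemma xlast_axis: "xlast (axis j 1 :: real^('n::finite+unit)) = (if j = Inr () then 1 else 0)"
  by (simp add: xlast_def axis_def)

lemma xprime_axis_Inl: "xprime (axis (Inl l) 1 :: real^('n::finite+unit)) = axis l 1"
  by (simp add: xprime_def axis_def vec_eq_iff)
lemma xprime_axis_Inr: "xprime (axis (Inr u) 1 :: real^('n::finite+unit)) = 0"
  by (simp add: xprime_def axis_def vec_eq_iff)

lemma xprime_axis_inner: "xprime (axis j 1 :: real^('n::finite+unit)) \<bullet> xprime x = (case j of Inl l \<Rightarrow> x $ Inl l | Inr _ \<Rightarrow> 0)"
  by (cases j) (auto simp: xprime_axis_Inl xprime_axis_Inr inner_axis', simp add: xprime_def)

lemma xprime_axis_inner2: "xprime (axis i 1 :: real^('n::finite+unit)) \<bullet> xprime (axis j 1) = (if i = j \<and> (\<exists>l. i = Inl l) then 1 else 0)"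
  by (cases i; cases j) (auto simp: xprime_axis_Inl xprime_axis_Inr inner_axis_axis)

definition ss :: "real^('n::finite+unit) \<Rightarrow> real" where
  "ss x = 1 - (norm (xprime x))\<^sup>2"

lemma ss_deriv: "(ss has_derivative (\<lambda>h. -2 * (xprime x \<bullet> xprime h))) (at (x::real^('n::finite+unit)))"
proof -
  have e: "ss = (\<lambda>x::real^('n+unit). 1 - xprime x \<bullet> xprime x)"
    by (auto simp: ss_def power2_norm_eq_inner)
  show ?thesis unfolding e
    by (rule derivative_eq_intros bounded_linear.has_derivative[OF bl_xprime] refl)+
       (auto simp: inner_commute)
qed

lemma hd_powr:
  assumes "(g has_derivative g') (at x)" "g x > (0::real)"
  shows "((\<lambda>x. g x powr r) has_derivative (\<lambda>h. r * g x powr (r-1) * g' h)) (at x)"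
proof -
  have "((\<lambda>x. g x powr r) has_derivative (\<lambda>h. g x powr r * (0 * ln (g x) + g' h * r / g x))) (at x)"
    using has_derivative_powr[OF assms(1) has_derivative_const, of r] assms(2) by auto
  then show ?thesis
    by (rule has_derivative_eq_rhs) (use assms(2) in \<open>auto simp: powr_diff field_simps fun_eq_iff\<close>)
qed

lemma open_Omega: "open (Omega :: (real^('n::finite+unit)) set)"
proof -
  have c1: "continuous_on UNIV (\<lambda>x::real^('n+unit). norm (xprime x))"
    by (intro continuous_intros linear_continuous_on bl_xprime)
  have c2: "continuous_on UNIV (xlast :: real^('n+unit) \<Rightarrow> real)"
    by (intro linear_continuous_on bl_xlast)
  have c3: "continuous_on UNIV (\<lambda>x::real^('n+unit). 1 - (norm (xprime x))\<^sup>2)"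
    by (intro continuous_intros linear_continuous_on bl_xprime)
  show ?thesis unfolding Omega_def
    by (intro open_Collect_conj open_Collect_less c1 c2 c3 continuous_on_const)
qed

lemma Omega_D: "x \<in> Omega \<Longrightarrow> 0 < xlast x \<and> xlast x < ss x \<and> 0 < ss x \<and> ss x \<le> 1"
  by (auto simp: Omega_def ss_def)

inductive_set FF :: "(real^('n::finite+unit) \<Rightarrow> real) set" where
  c: "(\<lambda>x. c) \<in> FF"
| co: "(\<lambda>x. x $ k) \<in> FF"
| tp: "(\<lambda>x. xlast x powr r) \<in> FF"
| sp: "(\<lambda>x. ss x powr r) \<in> FF"
| add: "f \<in> FF \<Longrightarrow> g \<in> FF \<Longrightarrow> (\<lambda>x. f x + g x) \<in> FF"
| mul: "f \<in> FF \<Longrightarrow> g \<in> FF \<Longrightarrow> (\<lambda>x. f x * g x) \<in> FF"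

lemma FF_deriv:
  assumes "f \<in> FF"
  shows "\<exists>D. (\<forall>x\<in>Omega. (f has_derivative D x) (at x)) \<and> (\<forall>k. \<exists>g\<in>FF. \<forall>x\<in>Omega. D x (axis k 1) = g x)"
  using assms
proof induction
  case (c c)
  show ?case
    by (rule exI[of _ "\<lambda>x h. 0"]) (auto intro!: bexI[of _ "\<lambda>x. 0"] FF.c)
next
  case (co k)
  show ?case
  proof (rule exI[of _ "\<lambda>x h. h $ k"], intro conjI ballI allI)
    fix x :: "real^('a+unit)"
    show "((\<lambda>x. x $ k) has_derivative (\<lambda>h. h $ k)) (at x)"
      by (rule bounded_linear.has_derivative[OF bounded_linear_vec_nth has_derivative_ident])
  next
    fix j :: "'a+unit"
    show "\<exists>g\<in>FF. \<forall>x\<in>Omega. axis j 1 $ k = g x"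
      by (rule bexI[of _ "\<lambda>x. axis j 1 $ k"]) (simp_all add: FF.c)
  qed
next
  case (tp r)
  show ?case
  proof (rule exI[of _ "\<lambda>x h. r * xlast x powr (r-1) * xlast h"], intro conjI ballI allI)
    fix x :: "real^('a+unit)" assume "x \<in> Omega"
    then show "((\<lambda>x. xlast x powr r) has_derivative (\<lambda>h. r * xlast x powr (r-1) * xlast h)) (at x)"
      by (intro hd_powr bounded_linear.has_derivative[OF bl_xlast has_derivative_ident]) (simp add: Omega_D)
  next
    fix j :: "'a+unit"
    show "\<exists>g\<in>FF. \<forall>x\<in>Omega. r * xlast x powr (r-1) * xlast (axis j 1) = g x"
      by (rule bexI[of _ "\<lambda>x. r * xlast x powr (r-1) * xlast (axis j 1 :: real^('a+unit))"])
        (simp_all add: FF.mul FF.c FF.tp)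
  qed
next
  case (sp r)
  show ?case
  proof (rule exI[of _ "\<lambda>x h. r * ss x powr (r-1) * (-2 * (xprime x \<bullet> xprime h))"], intro conjI ballI allI)
    fix x :: "real^('a+unit)" assume "x \<in> Omega"
    then show "((\<lambda>x. ss x powr r) has_derivative (\<lambda>h. r * ss x powr (r-1) * (-2 * (xprime x \<bullet> xprime h)))) (at x)"
      by (intro hd_powr ss_deriv) (simp add: Omega_D)
  next
    fix j :: "'a+unit"
    show "\<exists>g\<in>FF. \<forall>x\<in>Omega. r * ss x powr (r-1) * (-2 * (xprime x \<bullet> xprime (axis j 1))) = g x"
    proof (cases j)
      case (Inl l)
      have "\<forall>x\<in>Omega. r * ss x powr (r-1) * (-2 * (xprime x \<bullet> xprime (axis j 1))) = 
            r * ss x powr (r-1) * (-2 * x $ Inl l)"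
        using xprime_axis_inner[of j] by (simp add: Inl inner_commute)
      moreover have "(\<lambda>x::real^('a+unit). r * ss x powr (r-1) * (-2 * x $ Inl l)) \<in> FF"
        by (intro FF.mul FF.c FF.sp FF.co)
      ultimately show ?thesis
        by (intro bexI[where x="\<lambda>x. r * ss x powr (r-1) * (-2 * x $ Inl l)"]) auto
    next
      case (Inr u)
      show ?thesis
        by (rule bexI[of _ "\<lambda>x. 0"]) (simp_all add: Inr xprime_axis_Inr FF.c)
    qed
  qed
next
  case (add f g)
  then obtain Df Dg where f: "\<forall>x\<in>Omega. (f has_derivative Df x) (at x)" "\<forall>k. \<exists>g\<in>FF. \<forall>x\<in>Omega. Df x (axis k 1) = g x"
    and g: "\<forall>x\<in>Omega. (g has_derivative Dg x) (at x)" "\<forall>k. \<exists>g\<in>FF. \<forall>x\<in>Omega. Dg x (axis k 1) = g x"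
    by blast
  show ?case
  proof (rule exI[of _ "\<lambda>x h. Df x h + Dg x h"], intro conjI ballI allI)
    fix x :: "real^('a+unit)" assume "x \<in> Omega"
    then show "((\<lambda>x. f x + g x) has_derivative (\<lambda>h. Df x h + Dg x h)) (at x)"
      using f g by (simp add: has_derivative_add)
  next
    fix k :: "'a+unit"
    obtain f1 where "f1 \<in> FF" "\<forall>x\<in>Omega. Df x (axis k 1) = f1 x" using f by blast
    moreover obtain g1 where "g1 \<in> FF" "\<forall>x\<in>Omega. Dg x (axis k 1) = g1 x" using g by blast
    ultimately show "\<exists>h\<in>FF. \<forall>x\<in>Omega. Df x (axis k 1) + Dg x (axis k 1) = h x"
      by (intro bexI[of _ "\<lambda>x. f1 x + g1 x"]) (simp_all add: FF.add)
  qed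
next
  case (mul f g)
  then obtain Df Dg where f: "\<forall>x\<in>Omega. (f has_derivative Df x) (at x)" "\<forall>k. \<exists>g\<in>FF. \<forall>x\<in>Omega. Df x (axis k 1) = g x"
    and g: "\<forall>x\<in>Omega. (g has_derivative Dg x) (at x)" "\<forall>k. \<exists>g\<in>FF. \<forall>x\<in>Omega. Dg x (axis k 1) = g x"
    by blast
  have ff: "f \<in> FF" and gf: "g \<in> FF" using mul by blast+
  show ?case
  proof (rule exI[of _ "\<lambda>x h. f x * Dg x h + Df x h * g x"], intro conjI ballI allI)
    fix x :: "real^('a+unit)" assume "x \<in> Omega"
    then show "((\<lambda>x. f x * g x) has_derivative (\<lambda>h. f x * Dg x h + Df x h * g x)) (at x)"
      using f g by (simp add: has_derivative_mult)
  next
    fix k :: "'a+unit"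
    obtain f1 where "f1 \<in> FF" "\<forall>x\<in>Omega. Df x (axis k 1) = f1 x" using f by blast
    moreover obtain g1 where "g1 \<in> FF" "\<forall>x\<in>Omega. Dg x (axis k 1) = g1 x" using g by blast
    ultimately show "\<exists>h\<in>FF. \<forall>x\<in>Omega. f x * Dg x (axis k 1) + Df x (axis k 1) * g x = h x"
      using ff gf by (intro bexI[of _ "\<lambda>x. f x * g1 x + f1 x * g x"]) (simp_all add: FF.add FF.mul)
  qed
qed



lemma Ck_cong:
  assumes "open S" "\<And>x. x \<in> S \<Longrightarrow> f x = g x"
  shows "Ck_on k S f = Ck_on k S g"
  using assms(2)
proof (induction k arbitrary: f g)
  case 0
  then show ?case unfolding Ck_on.simps by (intro continuous_on_cong refl) simp
next
  case (Suc k)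
  have hd: "(f has_derivative D) (at x) \<longleftrightarrow> (g has_derivative D) (at x)" if "x \<in> S" for x D
  proof
    assume "(f has_derivative D) (at x)"
    then show "(g has_derivative D) (at x)"
      by (rule has_derivative_transform_within_open[OF _ assms(1) that]) (simp add: Suc.prems)
  next
    assume "(g has_derivative D) (at x)"
    then show "(f has_derivative D) (at x)"
      by (rule has_derivative_transform_within_open[OF _ assms(1) that]) (simp add: Suc.prems)
  qed
  have fd: "frechet_derivative f (at x) = frechet_derivative g (at x)" if "x \<in> S" for x
    unfolding frechet_derivative_def using hd[OF that] by simp
  have "f differentiable_on S \<longleftrightarrow> g differentiable_on S"
    unfolding differentiable_on_def differentiable_def at_within_open[OF _ assms(1)]
    using hd by (simp add: at_within_open[OF _ assms(1)])
  moreover have "Ck_on k S (\<lambda>x. frechet_derivative f (at x) (axis i 1)) = Ck_on k S (\<lambda>x. frechet_derivative g (at x) (axis i 1))" for i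
    by (rule Suc.IH) (simp add: fd)
  ultimately show ?case by simp
qed

lemma FF_Ck: "f \<in> FF \<Longrightarrow> Ck_on k Omega f"
proof (induction k arbitrary: f)
  case 0
  then obtain D where D: "\<forall>x\<in>Omega. (f has_derivative D x) (at x)" using FF_deriv by blast
  have "isCont f x" if "x \<in> Omega" for x
    using D that has_derivative_continuous by blast
  then show ?case
    by (simp add: continuous_at_imp_continuous_on)
next
  case (Suc k)
  then obtain D where D: "\<forall>x\<in>Omega. (f has_derivative D x) (at x)" "\<forall>k. \<exists>g\<in>FF. \<forall>x\<in>Omega. D x (axis k 1) = g x"
    using FF_deriv by blast
  have "f differentiable_on Omega"
    using D(1) unfolding differentiable_on_def differentiable_def
    by (meson has_derivative_at_withinI)
  moreover have "Ck_on k Omega (\<lambda>x. frechet_derivative f (at x) (axis i 1))" for i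
  proof -
    obtain g where g: "g \<in> FF" "\<forall>x\<in>Omega. D x (axis i 1) = g x" using D(2) by blast
    have "Ck_on k Omega (\<lambda>x. frechet_derivative f (at x) (axis i 1)) = Ck_on k Omega g"
      by (rule Ck_cong[OF open_Omega]) (metis D(1) g(2) frechet_derivative_at)
    then show ?thesis using Suc.IH[OF g(1)] by simp
  qed
  ultimately show ?case by simp
qed



lemma det_special:
  fixes V :: "('n::finite + unit) \<Rightarrow> real"
  assumes V1: "V (Inr ()) = 1"
  shows "det (\<chi> i j. \<alpha> * (if i = j \<and> i \<noteq> Inr () then 1 else 0) + \<delta> * V i * V j :: real^('n+unit)^('n+unit))
         = \<alpha> ^ CARD('n) * \<delta>"
proof -
  define E :: "real^('n+unit)^('n+unit)" where "E = (\<chi> k i. if k = Inr () then V i else (if k = i then 1 else 0))"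
  define d where "d = (\<lambda>k::'n+unit. if k = Inr () then \<delta> else \<alpha>)"
  define Dg :: "real^('n+unit)^('n+unit)" where "Dg = (\<chi> i j. if i = j then d i else 0)"
  have DE: "Dg ** E = (\<chi> k j. d k * E $ k $ j)"
  proof -
    have "(\<Sum>k\<in>UNIV. (if i = k then d i else 0) * E $ k $ j) = d i * E $ i $ j" for i j
    proof -
      have "(\<Sum>k\<in>UNIV. (if i = k then d i else 0) * E $ k $ j) = (\<Sum>k\<in>UNIV. if i = k then d i * E $ k $ j else 0)"
        by (rule sum.cong) auto
      then show ?thesis by simp
    qed
    then show ?thesis by (simp add: Dg_def matrix_matrix_mult_def vec_eq_iff)
  qed
  have sumsplit: "(\<Sum>k\<in>UNIV. f k) = f (Inr ()) + (\<Sum>k\<in>UNIV - {Inr ()}. f k)" for f :: "'n+unit \<Rightarrow> real"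
    by (simp add: sum.remove)
  have main: "transpose E ** (Dg ** E) = (\<chi> i j. \<alpha> * (if i = j \<and> i \<noteq> Inr () then 1 else 0) + \<delta> * V i * V j)"
  proof -
    have "(\<Sum>k\<in>UNIV - {Inr ()}. E $ k $ i * (d k * E $ k $ j)) = \<alpha> * (if i = j \<and> i \<noteq> Inr () then 1 else 0)" for i j
    proof -
      have "(\<Sum>k\<in>UNIV - {Inr ()}. E $ k $ i * (d k * E $ k $ j)) = (\<Sum>k\<in>UNIV - {Inr ()}. if k = i then (if k = j then \<alpha> else 0) else 0)"
        by (rule sum.cong) (auto simp: E_def d_def)
      also have "\<dots> = \<alpha> * (if i = j \<and> i \<noteq> Inr () then 1 else 0)"
        using sum.delta'[of "UNIV - {Inr ()}" i "\<lambda>k. if k = j then \<alpha> else 0"] by auto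
      finally show ?thesis .
    qed
    then show ?thesis
      unfolding DE
      by (simp add: matrix_matrix_mult_def vec_eq_iff transpose_def sumsplit)
         (simp add: E_def d_def algebra_simps)
  qed
  have detE: "det E = 1"
  proof -
    let ?I = "mat 1 :: real^('n+unit)^('n+unit)"
    let ?z = "\<Sum>j\<in>UNIV - {Inr ()}. V j *s row j ?I"
    have "?z \<in> vec.span {row j ?I | j. j \<noteq> Inr ()}"
      by (force intro: vec.span_sum vec.span_scale vec.span_base)
    from det_row_span[OF this]
    have "det (\<chi> k. if k = Inr () then row (Inr ()) ?I + ?z else row k ?I) = 1" by simp
    moreover have "(\<chi> k. if k = Inr () then row (Inr ()) ?I + ?z else row k ?I) = E"
    proof -
      have h: "?z $ i = (if i = Inr () then 0 else V i)" for i
      proof -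
        have "?z $ i = (\<Sum>j\<in>UNIV - {Inr ()}. (V j *s row j ?I) $ i)"
          by (rule sum_component)
        also have "\<dots> = (\<Sum>j\<in>UNIV - {Inr ()}. if j = i then V j else 0)"
          by (rule sum.cong) (auto simp: row_def mat_def)
        also have "\<dots> = (if i = Inr () then 0 else V i)"
          using sum.delta'[of "UNIV - {Inr ()}" i V] by auto
        finally show ?thesis .
      qed
      show ?thesis
        unfolding vec_eq_iff
      proof (intro allI)
        fix k i
        show "(\<chi> k. if k = Inr () then row (Inr ()) ?I + ?z else row k ?I) $ k $ i = E $ k $ i"
          using h[of i] by (cases "k = Inr ()") (auto simp: E_def row_def mat_def V1)
      qed
    qed
    ultimately show ?thesis by simp
  qed
  have detD: "det Dg = \<alpha> ^ CARD('n) * \<delta>"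
  proof -
    have "det Dg = (\<Prod>i\<in>UNIV. d i)"
      by (subst det_diagonal) (auto simp: Dg_def)
    also have "\<dots> = d (Inr ()) * (\<Prod>i\<in>UNIV - {Inr ()}. d i)"
      by (simp add: prod.remove)
    also have "(\<Prod>i\<in>UNIV - {Inr ()}. d i) = (\<Prod>i\<in>(UNIV::('n+unit) set) - {Inr ()}. \<alpha>)"
      by (rule prod.cong) (auto simp: d_def)
    also have "\<dots> = \<alpha> ^ CARD('n)"
      by (simp add: card_UNIV_sum)
    finally show ?thesis by (simp add: d_def)
  qed
  show ?thesis
    unfolding main[symmetric] det_mul detE detD det_transpose by simp
qed



lemma young0:
  fixes x y a b :: real
  assumes "0 \<le> x" "0 \<le> y" "0 < a" "0 < b" "a + b = 1"
  shows "x powr a * y powr b \<le> a * x + b * y"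
proof (cases "x = 0 \<or> y = 0")
  case True
  then show ?thesis using assms by auto
next
  case False
  then show ?thesis using Youngs_inequality_0[of a b x y] assms by auto
qed

lemma holder2:
  fixes T1 T2 S1 S2 a b :: real
  assumes "0 \<le> T1" "0 \<le> T2" "0 \<le> S1" "0 \<le> S2" "0 < T1 + T2" "0 < S1 + S2"
    "0 < a" "0 < b" "a + b = 1"
  shows "T1 powr a * S1 powr b + T2 powr a * S2 powr b \<le> (T1 + T2) powr a * (S1 + S2) powr b"
proof -
  define T S where "T = T1 + T2" and "S = S1 + S2"
  have TS: "T > 0" "S > 0" using assms by (auto simp: T_def S_def)
  have "(T1/T) powr a * (S1/S) powr b \<le> a * (T1/T) + b * (S1/S)"
    using TS assms by (intro young0) auto
  moreover have "(T2/T) powr a * (S2/S) powr b \<le> a * (T2/T) + b * (S2/S)"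
    using TS assms by (intro young0) auto
  ultimately have "(T1/T) powr a * (S1/S) powr b + (T2/T) powr a * (S2/S) powr b \<le> a * ((T1+T2)/T) + b * ((S1+S2)/S)"
    by (simp add: add_divide_distrib algebra_simps)
  also have "\<dots> = 1" using TS assms by (simp add: T_def S_def)
  finally have "(T1 powr a * S1 powr b + T2 powr a * S2 powr b) / (T powr a * S powr b) \<le> 1"
    using assms TS by (simp add: powr_divide add_divide_distrib)
  moreover have "T powr a * S powr b > 0" using TS by simp
  ultimately have "T1 powr a * S1 powr b + T2 powr a * S2 powr b \<le> T powr a * S powr b"
    by (simp add: pos_divide_le_eq)
  then show ?thesis by (simp add: T_def S_def)
qed

lemma norm_sq_convex:
  fixes A B :: "'a::real_normed_vector"
  assumes "0 \<le> u" "0 \<le> v" "u + v = 1"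
  shows "(norm (u *\<^sub>R A + v *\<^sub>R B))\<^sup>2 \<le> u * (norm A)\<^sup>2 + v * (norm B)\<^sup>2"
proof -
  have "norm (u *\<^sub>R A + v *\<^sub>R B) \<le> u * norm A + v * norm B"
    using norm_triangle_ineq[of "u *\<^sub>R A" "v *\<^sub>R B"] assms by simp
  then have "(norm (u *\<^sub>R A + v *\<^sub>R B))\<^sup>2 \<le> (u * norm A + v * norm B)\<^sup>2"
    by (simp add: power_mono)
  also have "\<dots> = u * (norm A)\<^sup>2 + v * (norm B)\<^sup>2 - u * v * (norm A - norm B)\<^sup>2"
  proof -
    have v: "v = 1 - u" using assms(3) by simp
    show ?thesis unfolding v by (simp add: power2_eq_square algebra_simps)
  qed
  also have "\<dots> \<le> u * (norm A)\<^sup>2 + v * (norm B)\<^sup>2"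
    using assms by simp
  finally show ?thesis .
qed

lemma xprime_comb: "xprime (u *\<^sub>R x + v *\<^sub>R y) = u *\<^sub>R xprime x + v *\<^sub>R xprime y"
  by (simp add: xprime_def vec_eq_iff)
lemma xlast_comb: "xlast (u *\<^sub>R x + v *\<^sub>R y) = u * xlast x + v * xlast y"
  by (simp add: xlast_def)

lemma ss_concave:
  assumes "0 \<le> u" "0 \<le> v" "u + v = 1"
  shows "u * ss x + v * ss y \<le> ss (u *\<^sub>R x + v *\<^sub>R y)"
  using norm_sq_convex[OF assms, of "xprime x" "xprime y"] assms
  by (simp add: ss_def xprime_comb algebra_simps)

lemma Omega_alt: "Omega = {x. 0 < xlast x \<and> xlast x < ss x}"
proof -
  have "norm (xprime x) < 1" if "0 < xlast x" "xlast x < ss x" for x :: "real^('n::finite+unit)"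
  proof -
    have "(norm (xprime x))\<^sup>2 < 1" using that by (simp add: ss_def)
    then show ?thesis by (simp add: power_less_one_iff abs_square_less_1)
  qed
  then show ?thesis by (auto simp: Omega_def ss_def)
qed

definition W :: "real \<Rightarrow> real \<Rightarrow> real \<Rightarrow> real^('n::finite+unit) \<Rightarrow> real" where
  "W C a b x = C * xlast x - C * xlast x powr a * ss x powr b"

lemma convex_Omega: "convex (Omega :: (real^('n::finite+unit)) set)"
proof (rule convexI)
  fix x y :: "real^('n+unit)" and u v :: real
  assume xy: "x \<in> Omega" "y \<in> Omega" and uv: "0 \<le> u" "0 \<le> v" "u + v = 1"
  have x: "0 < xlast x" "xlast x < ss x" and y: "0 < xlast y" "xlast y < ss y"
    using xy by (auto simp: Omega_alt)
  have d: "u > 0 \<or> v > 0" using uv by auto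
  have p1: "u * xlast x \<ge> 0" "v * xlast y \<ge> 0" "u * (ss x - xlast x) \<ge> 0" "v * (ss y - xlast y) \<ge> 0"
    using x y uv by auto
  have "u * xlast x > 0 \<or> v * xlast y > 0" using d x y by auto
  then have 1: "0 < u * xlast x + v * xlast y" using p1 by linarith
  have "u * (ss x - xlast x) > 0 \<or> v * (ss y - xlast y) > 0" using d x y by auto
  then have "0 < u * (ss x - xlast x) + v * (ss y - xlast y)" using p1 by linarith
  then have 2: "u * xlast x + v * xlast y < u * ss x + v * ss y" by (simp add: algebra_simps)
  show "u *\<^sub>R x + v *\<^sub>R y \<in> Omega"
    using 1 2 ss_concave[OF uv, of x y] by (auto simp: Omega_alt xlast_comb)
qed

lemma convex_W:
  assumes "C > 0" "0 < a" "0 < b" "a + b = 1"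
  shows "convex_on (Omega :: (real^('n::finite+unit)) set) (W C a b)"
  unfolding convex_on_def
proof (intro conjI convex_Omega ballI allI impI)
  fix x y :: "real^('n+unit)" and u v :: real
  assume xy: "x \<in> Omega" "y \<in> Omega" and uv: "0 \<le> u" "0 \<le> v" "u + v = 1"
  show "W C a b (u *\<^sub>R x + v *\<^sub>R y) \<le> u * W C a b x + v * W C a b y"
  proof (cases "u = 0 \<or> v = 0")
    case True
    then show ?thesis using uv by auto
  next
    case False
    then have u: "u > 0" and v: "v > 0" using uv by auto
    have x: "0 < xlast x" "xlast x < ss x" and y: "0 < xlast y" "xlast y < ss y"
      using xy by (auto simp: Omega_alt)
    let ?z = "u *\<^sub>R x + v *\<^sub>R y"
    have h: "(u * xlast x) powr a * (u * ss x) powr b + (v * xlast y) powr a * (v * ss y) powr b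
          \<le> (u * xlast x + v * xlast y) powr a * (u * ss x + v * ss y) powr b"
      using u v x y assms by (intro holder2) (auto intro!: add_pos_pos)
    have e1: "(u * xlast x) powr a * (u * ss x) powr b = u * (xlast x powr a * ss x powr b)"
      using u x assms by (simp add: powr_mult powr_add[symmetric])
    have e2: "(v * xlast y) powr a * (v * ss y) powr b = v * (xlast y powr a * ss y powr b)"
      using v y assms by (simp add: powr_mult powr_add[symmetric])
    have "(u * ss x + v * ss y) powr b \<le> ss ?z powr b"
      using ss_concave[OF uv, of x y] u v x y assms by (intro powr_mono2) auto
    then have "(u * xlast x + v * xlast y) powr a * (u * ss x + v * ss y) powr b \<le> xlast ?z powr a * ss ?z powr b"
      by (simp add: xlast_comb mult_left_mono)
    with h e1 e2 have key: "u * (xlast x powr a * ss x powr b) + v * (xlast y powr a * ss y powr b) \<le> xlast ?z powr a * ss ?z powr b"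
      by simp
    have "W C a b ?z = C * (u * xlast x + v * xlast y) - C * (xlast ?z powr a * ss ?z powr b)"
      by (simp add: W_def xlast_comb)
    also have "\<dots> \<le> C * (u * xlast x + v * xlast y) - C * (u * (xlast x powr a * ss x powr b) + v * (xlast y powr a * ss y powr b))"
      using key assms(1) by simp
    also have "\<dots> = u * W C a b x + v * W C a b y"
      by (simp add: W_def algebra_simps)
    finally show ?thesis .
  qed
qed

lemma frontier_W:
  assumes "x \<in> frontier (Omega :: (real^('n::finite+unit)) set)" "a + b = 1"
  shows "W C a b x = 0"
proof -
  let ?K = "{x::real^('n+unit). 0 \<le> xlast x \<and> xlast x \<le> ss x}"
  have cl: "closed ?K"
  proof -
    have c2: "continuous_on UNIV (xlast :: real^('n+unit) \<Rightarrow> real)"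
      by (intro linear_continuous_on bl_xlast)
    have c3: "continuous_on UNIV (ss :: real^('n+unit) \<Rightarrow> real)"
      unfolding ss_def[abs_def] by (intro continuous_intros linear_continuous_on bl_xprime)
    show ?thesis
      by (intro closed_Collect_conj closed_Collect_le c2 c3 continuous_on_const)
  qed
  have "Omega \<subseteq> ?K" by (auto simp: Omega_alt)
  then have "closure Omega \<subseteq> ?K" using cl by (rule closure_minimal)
  moreover have "x \<in> closure Omega" "x \<notin> Omega"
    using assms(1) by (auto simp: frontier_def interior_open[OF open_Omega])
  ultimately have t: "0 \<le> xlast x" "xlast x \<le> ss x" "\<not> (0 < xlast x \<and> xlast x < ss x)"
    by (auto simp: Omega_alt)
  then have "xlast x = 0 \<or> xlast x = ss x" by linarith
  then show ?thesis
  proof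
    assume "xlast x = 0" then show ?thesis by (simp add: W_def)
  next
    assume e: "xlast x = ss x"
    have "xlast x powr a * ss x powr b = xlast x"
      using e t assms(2) by (simp add: powr_add[symmetric])
    then show ?thesis by (simp add: W_def mult.assoc)
  qed
qed



definition DW :: "real \<Rightarrow> real \<Rightarrow> real \<Rightarrow> real^('n::finite+unit) \<Rightarrow> real^('n+unit) \<Rightarrow> real" where
  "DW C a b x h = C * xlast h - C * (a * xlast x powr (a-1) * xlast h * ss x powr b
      + xlast x powr a * (b * ss x powr (b-1) * (-2 * (xprime x \<bullet> xprime h))))"

lemma t_deriv: "(xlast has_derivative xlast) (at x)"
  by (rule bounded_linear.has_derivative[OF bl_xlast has_derivative_ident, simplified])

lemma tp_deriv: "x \<in> Omega \<Longrightarrow> ((\<lambda>x. xlast x powr r) has_derivative (\<lambda>h. r * xlast x powr (r-1) * xlast h)) (at x)"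
  by (intro hd_powr t_deriv) (simp add: Omega_D)

lemma sp_deriv: "x \<in> Omega \<Longrightarrow> ((\<lambda>x. ss x powr r) has_derivative (\<lambda>h. r * ss x powr (r-1) * (-2 * (xprime x \<bullet> xprime h)))) (at x)"
  by (intro hd_powr ss_deriv) (simp add: Omega_D)

lemma W_deriv:
  assumes "x \<in> Omega"
  shows "(W C a b has_derivative DW C a b x) (at x)"
proof -
  have "((\<lambda>x. C * xlast x - C * xlast x powr a * ss x powr b) has_derivative
     (\<lambda>h. (C * xlast h + 0 * xlast x) - ((C * xlast x powr a) * (b * ss x powr (b-1) * (-2 * (xprime x \<bullet> xprime h)))
          + (C * (a * xlast x powr (a-1) * xlast h) + 0 * xlast x powr a) * ss x powr b))) (at x)"
    by (intro has_derivative_diff has_derivative_mult has_derivative_const t_deriv tp_deriv sp_deriv assms)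
  then show ?thesis
    unfolding W_def[abs_def]
    by (rule has_derivative_eq_rhs) (simp add: DW_def fun_eq_iff algebra_simps)
qed

definition PW :: "real \<Rightarrow> real \<Rightarrow> real \<Rightarrow> ('n::finite+unit) \<Rightarrow> real^('n+unit) \<Rightarrow> real" where
  "PW C a b j y = C * xlast (axis j 1 :: real^('n+unit)) - C * (a * xlast (axis j 1 :: real^('n+unit)) * (xlast y powr (a-1) * ss y powr b)
      - 2 * b * (xlast y powr a * ss y powr (b-1)) * (xprime y \<bullet> xprime (axis j 1 :: real^('n+unit))))"

lemma fd_W: "y \<in> Omega \<Longrightarrow> frechet_derivative (W C a b) (at y) (axis j 1) = PW C a b j y"
  using frechet_derivative_at[OF W_deriv, of y C a b, symmetric]
  by (simp add: DW_def PW_def algebra_simps)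

definition QW :: "real \<Rightarrow> real \<Rightarrow> real \<Rightarrow> ('n::finite+unit) \<Rightarrow> real^('n+unit) \<Rightarrow> real^('n+unit) \<Rightarrow> real" where
  "QW C a b j x h = - C * (a * xlast (axis j 1 :: real^('n+unit)) *
       ((a-1) * xlast x powr (a-2) * xlast h * ss x powr b + xlast x powr (a-1) * (b * ss x powr (b-1) * (-2 * (xprime x \<bullet> xprime h))))
     - 2 * b * ((a * xlast x powr (a-1) * xlast h * ss x powr (b-1) + xlast x powr a * ((b-1) * ss x powr (b-2) * (-2 * (xprime x \<bullet> xprime h))))
           * (xprime x \<bullet> xprime (axis j 1 :: real^('n+unit)))
         + xlast x powr a * ss x powr (b-1) * (xprime h \<bullet> xprime (axis j 1 :: real^('n+unit)))))"

lemma PW_deriv: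
  fixes j :: "'n::finite + unit"
  assumes "x \<in> Omega"
  shows "(PW C a b j has_derivative QW C a b j x) (at x)"
proof -
  let ?L = "xlast (axis j 1 :: real^('n+unit))"
  let ?c = "xprime (axis j 1 :: real^('n+unit))"
  have Y: "((\<lambda>y. xprime y \<bullet> ?c) has_derivative (\<lambda>h. xprime h \<bullet> ?c)) (at x)"
    by (rule bounded_linear.has_derivative[OF bounded_linear_compose[OF bounded_linear_inner_left bl_xprime] has_derivative_ident])
  have d1: "((\<lambda>y. xlast y powr (a-1) * ss y powr b) has_derivative
      (\<lambda>h. xlast x powr (a-1) * (b * ss x powr (b-1) * (-2 * (xprime x \<bullet> xprime h))) + ((a-1) * xlast x powr (a-1-1) * xlast h) * ss x powr b)) (at x)"
    by (intro has_derivative_mult tp_deriv sp_deriv assms)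
  have d2: "((\<lambda>y. xlast y powr a * ss y powr (b-1)) has_derivative
      (\<lambda>h. xlast x powr a * ((b-1) * ss x powr (b-1-1) * (-2 * (xprime x \<bullet> xprime h))) + (a * xlast x powr (a-1) * xlast h) * ss x powr (b-1))) (at x)"
    by (intro has_derivative_mult tp_deriv sp_deriv assms)
  show ?thesis
    unfolding PW_def[abs_def]
    apply (rule has_derivative_eq_rhs)
     apply (rule has_derivative_diff[OF has_derivative_const has_derivative_mult[OF has_derivative_const has_derivative_diff[OF has_derivative_mult[OF has_derivative_const d1] has_derivative_mult[OF has_derivative_mult[OF has_derivative_const d2] Y]]]])
    apply (simp add: QW_def fun_eq_iff algebra_simps)
    done
qed

lemma hess_W:
  fixes x :: "real^('n::finite+unit)"
  assumes "x \<in> Omega"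
  shows "hessian (W C a b) x $ i $ j = QW C a b j x (axis i 1)"
proof -
  have "((\<lambda>y. frechet_derivative (W C a b) (at y) (axis j 1)) has_derivative QW C a b j x) (at x)"
    by (rule has_derivative_transform_within_open[OF PW_deriv[OF assms] open_Omega assms])
       (simp add: fd_W)
  then show ?thesis
    unfolding hessian_def by (simp add: frechet_derivative_at[symmetric])
qed

lemma alg_id:
  fixes t s a b C Li Lj Yi Yj Mij :: real
  assumes "t > 0" "s > 0" "b = 1 - a"
  shows "- C * (a * Lj * ((a-1) * t powr (a-2) * Li * s powr b + t powr (a-1) * (b * s powr (b-1) * (-2 * Yi)))
     - 2 * b * ((a * t powr (a-1) * Li * s powr (b-1) + t powr a * ((b-1) * s powr (b-2) * (-2 * Yi))) * Yj
         + t powr a * s powr (b-1) * Mij))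
   = (2*C*b*(t powr a)*(s powr b)/s) * Mij + (C*a*b*(t powr a)*(s powr b)/t^2) * (Li + 2*t/s*Yi) * (Lj + 2*t/s*Yj)"
proof -
  have t1: "t powr (a-1) = t powr a / t" and t2: "t powr (a-2) = t powr a / t^2"
    using assms(1) by (simp_all add: powr_diff powr_numeral)
  have s1: "s powr (b-1) = s powr b / s" and s2: "s powr (b-2) = s powr b / s^2"
    using assms(2) by (simp_all add: powr_diff powr_numeral)
  have a1: "a - 1 = - b" "b - 1 = - a" using assms(3) by simp_all
  show ?thesis
    unfolding t1 t2 s1 s2 unfolding a1 using assms(1,2)
    by (simp add: field_simps power2_eq_square)
qed

lemma inr_iff: "(\<exists>l. i = Inl l) \<longleftrightarrow> i \<noteq> Inr ()"
  by (cases i) auto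

lemma hess_W_explicit:
  fixes x :: "real^('n::finite+unit)"
  assumes "x \<in> Omega" "b = 1 - a"
  defines "t \<equiv> xlast x" and "s \<equiv> ss x"
  shows "hessian (W C a b) x = (\<chi> i j. (2*C*b*(t powr a)*(s powr b)/s) * (if i = j \<and> i \<noteq> Inr () then 1 else 0)
       + (C*a*b*(t powr a)*(s powr b)/t^2) * (xlast (axis i 1 :: real^('n+unit)) + 2*t/s*(xprime x \<bullet> xprime (axis i 1 :: real^('n+unit))))
                                          * (xlast (axis j 1 :: real^('n+unit)) + 2*t/s*(xprime x \<bullet> xprime (axis j 1 :: real^('n+unit)))))"
proof -
  have ts: "t > 0" "s > 0" using Omega_D[OF assms(1)] by (auto simp: t_def s_def)
  show ?thesis
    unfolding vec_eq_iff
  proof (intro allI)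
    fix i j :: "'n+unit"
    show "hessian (W C a b) x $ i $ j = (\<chi> i j. (2*C*b*(t powr a)*(s powr b)/s) * (if i = j \<and> i \<noteq> Inr () then 1 else 0)
       + (C*a*b*(t powr a)*(s powr b)/t^2) * (xlast (axis i 1 :: real^('n+unit)) + 2*t/s*(xprime x \<bullet> xprime (axis i 1 :: real^('n+unit))))
                                          * (xlast (axis j 1 :: real^('n+unit)) + 2*t/s*(xprime x \<bullet> xprime (axis j 1 :: real^('n+unit))))) $ i $ j"
      unfolding hess_W[OF assms(1)] QW_def
      using alg_id[OF ts assms(2), of C "xlast (axis j 1 :: real^('n+unit))" "xlast (axis i 1 :: real^('n+unit))"
          "xprime x \<bullet> xprime (axis i 1 :: real^('n+unit))" "xprime x \<bullet> xprime (axis j 1 :: real^('n+unit))"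
          "xprime (axis i 1 :: real^('n+unit)) \<bullet> xprime (axis j 1 :: real^('n+unit))"]
      by (simp add: t_def s_def xprime_axis_inner2 inr_iff inner_commute)
  qed
qed

lemma det_hess:
  fixes x :: "real^('n::finite+unit)"
  assumes "x \<in> Omega" "b = 1 - a"
  shows "det (hessian (W C a b) x) = (2*C*b*(xlast x powr a)*(ss x powr b)/ss x) ^ CARD('n) * (C*a*b*(xlast x powr a)*(ss x powr b)/(xlast x)^2)"
proof -
  let ?V = "\<lambda>i. xlast (axis i 1 :: real^('n+unit)) + 2 * xlast x / ss x * (xprime x \<bullet> xprime (axis i 1 :: real^('n+unit)))"
  have V1: "?V (Inr ()) = 1"
    by (simp add: xlast_axis xprime_axis_Inr)
  show ?thesis
    unfolding hess_W_explicit[OF assms]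
    by (rule det_special[of ?V, OF V1])
qed



lemma final_ineq:
  fixes t s p :: real and m :: nat
  assumes "0 < t" "t < s" "s \<le> 1" "p \<ge> 1" "m \<ge> 1"
  defines "n \<equiv> real (m + 1)"
  defines "a \<equiv> 2 / (n + p)" and "b \<equiv> (n + p - 2) / (n + p)"
  shows "(2*(1/2)*b*(t powr a)*(s powr b)/s) ^ m * ((1/2)*a*b*(t powr a)*(s powr b)/t^2)
         \<le> \<bar>(1/2) * t - (1/2) * t powr a * s powr b\<bar> powr (-p)"
proof -
  have n2: "n \<ge> 2" using assms(5) by (simp add: n_def)
  have np: "n + p > 0" using n2 assms(4) by simp
  have a0: "a > 0" and b0: "b > 0" using n2 assms(4) np by (auto simp: a_def b_def)
  have ab: "a + b = 1" unfolding a_def b_def using np by (simp add: add_divide_distrib[symmetric])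
  have a1: "a \<le> 1" and b1: "b \<le> 1" using a0 b0 ab by auto
  have s0: "s > 0" using assms by simp
  define G where "G = t powr a * s powr b"
  have tG: "t < G"
  proof -
    have "t powr b < s powr b" using b0 assms by (intro powr_less_mono2) auto
    then have "t powr a * t powr b < t powr a * s powr b" using assms(1) by simp
    moreover have "t powr a * t powr b = t" using ab assms(1) by (simp add: powr_add[symmetric])
    ultimately show ?thesis by (simp add: G_def)
  qed
  have G0: "G > 0" using tG assms(1) by simp
  have absW: "\<bar>(1/2) * t - (1/2) * t powr a * s powr b\<bar> = (G - t) / 2"
    using tG by (simp add: G_def)
  have L: "(2*(1/2)*b*(t powr a)*(s powr b)/s) ^ m * ((1/2)*a*b*(t powr a)*(s powr b)/t^2)
      = b^m * a * b / 2 * G^(m+1) / (s^m * t^2)"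
    by (simp add: G_def power_divide power_mult_distrib field_simps)
  define K where "K = b^m * a * b / 2 * G^(m+1) / (s^m * t^2)"
  have K0: "K > 0" using a0 b0 G0 s0 assms(1) by (simp add: K_def)
  have Wp: "((G - t) / 2) powr p \<le> (G / 2) powr p"
    using tG assms by (intro powr_mono2) auto
  have Gpow: "G^(m+1) * G powr p = t^2 * (s^m * s powr (p - 1))"
  proof -
    have "G^(m+1) * G powr p = G powr (n + p)"
      using G0 by (simp add: n_def powr_add powr_realpow[symmetric])
    also have "\<dots> = t powr (a * (n+p)) * s powr (b * (n+p))"
      using assms(1) s0 by (simp add: G_def powr_mult powr_powr)
    also have "a * (n+p) = 2" using np by (simp add: a_def field_simps)
    also have "b * (n+p) = real m + (p - 1)" using np by (simp add: b_def n_def field_simps)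
    also have "t powr 2 = t^2" using assms(1) by (simp add: powr_numeral)
    also have "s powr (real m + (p - 1)) = s^m * s powr (p-1)"
      using s0 by (simp add: powr_add powr_realpow)
    finally show ?thesis .
  qed
  have "K * (G / 2) powr p = b^m * a * b / (2 * 2 powr p) * s powr (p - 1)"
  proof -
    have "K * (G / 2) powr p = b^m * a * b / (2 * 2 powr p) * (G^(m+1) * G powr p) / (s^m * t^2)"
      using G0 by (simp add: K_def powr_divide field_simps)
    also have "\<dots> = b^m * a * b / (2 * 2 powr p) * s powr (p - 1)"
      unfolding Gpow using s0 assms(1) by (simp add: field_simps)
    finally show ?thesis .
  qed
  also have "\<dots> \<le> 1"
  proof -
    have "s powr (p - 1) \<le> 1" using assms s0 by (intro powr_le1) auto
    moreover have "b^m \<le> 1" using b0 b1 by (simp add: power_le_one)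
    moreover have "a * b \<le> 1" using a0 b0 a1 b1 by (simp add: mult_le_one)
    moreover have "2 * 2 powr p \<ge> 1"
    proof -
      have "2 powr p \<ge> 1" using assms(4) by (intro ge_one_powr_ge_zero) auto
      then show ?thesis by simp
    qed
    ultimately have "b^m * (a * b) * s powr (p - 1) \<le> 1 * 1 * 1"
      using a0 b0 by (intro mult_mono) (auto simp: mult_le_one)
    then have "b^m * a * b * s powr (p - 1) \<le> 1" by (simp add: mult.assoc)
    then have "b^m * a * b * s powr (p - 1) \<le> 2 * 2 powr p" using \<open>2 * 2 powr p \<ge> 1\<close> by linarith
    then show ?thesis by (simp add: field_simps)
  qed
  finally have k1: "K * (G / 2) powr p \<le> 1" .
  have "K * ((G - t) / 2) powr p \<le> 1"
    using mult_left_mono[OF Wp, of K] K0 k1 by linarith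
  moreover have "((G - t) / 2) powr p > 0" using tG by simp
  ultimately have "K \<le> 1 / ((G - t) / 2) powr p"
    by (simp add: field_simps)
  then show ?thesis
    unfolding L absW K_def[symmetric] by (simp add: powr_minus_divide)
qed



theorem lemma2p4:
  fixes p :: real
  assumes "p \<ge> 1"
  shows "\<exists>C>0. let n = real (CARD('n::finite) + 1);
             w = (\<lambda>x::real ^ ('n + unit). C * xlast x
                    - C * (xlast x) powr (2 / (n + p))
                        * (1 - (norm (xprime x))\<^sup>2) powr ((n + p - 2) / (n + p)))
           in smooth_on (Omega :: (real ^ ('n + unit)) set) w
            \<and> convex_on (Omega :: (real ^ ('n + unit)) set) w
            \<and> (\<forall>x\<in>(Omega :: (real ^ ('n + unit)) set). det (hessian w x) \<le> \<bar>w x\<bar> powr (- p))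
            \<and> (\<forall>x\<in>frontier (Omega :: (real ^ ('n + unit)) set). w x = 0)"
proof (rule exI[of _ "1/2"], intro conjI)
  define n where "n = real (CARD('n) + 1)"
  define a where "a = 2 / (n + p)"
  define b where "b = (n + p - 2) / (n + p)"
  have m1: "CARD('n) \<ge> 1" by (simp add: Suc_leI)
  have n2: "n \<ge> 2" using m1 by (simp add: n_def)
  have np: "n + p > 0" using n2 assms by simp
  have a0: "a > 0" and b0: "b > 0" using n2 assms np by (auto simp: a_def b_def)
  have ab: "a + b = 1" unfolding a_def b_def using np by (simp add: add_divide_distrib[symmetric])
  have weq: "(\<lambda>x::real ^ ('n + unit). (1/2) * xlast x - (1/2) * (xlast x) powr a * (1 - (norm (xprime x))\<^sup>2) powr b)
      = W (1/2) a b"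
    by (simp add: fun_eq_iff W_def ss_def)
  have WFF: "W (1/2) a b \<in> (FF :: (real^('n+unit) \<Rightarrow> real) set)"
  proof -
    have "W (1/2) a b = (\<lambda>x::real^('n+unit). (\<lambda>x. (1/2) * x $ Inr ()) x + (\<lambda>x. (-(1/2)) * (xlast x powr a * ss x powr b)) x)"
      by (simp add: fun_eq_iff W_def xlast_def)
    also have "\<dots> \<in> FF"
      by (intro FF.add FF.mul FF.c FF.co FF.tp FF.sp)
    finally show ?thesis .
  qed
  have main: "smooth_on (Omega :: (real ^ ('n + unit)) set) (W (1/2) a b)
            \<and> convex_on (Omega :: (real ^ ('n + unit)) set) (W (1/2) a b)
            \<and> (\<forall>x\<in>(Omega :: (real ^ ('n + unit)) set). det (hessian (W (1/2) a b) x) \<le> \<bar>W (1/2) a b x\<bar> powr (- p))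
            \<and> (\<forall>x\<in>frontier (Omega :: (real ^ ('n + unit)) set). W (1/2) a b x = 0)"
  proof (intro conjI ballI)
    show "smooth_on (Omega :: (real ^ ('n + unit)) set) (W (1/2) a b)"
      unfolding smooth_on_def using WFF FF_Ck by blast
    show "convex_on (Omega :: (real ^ ('n + unit)) set) (W (1/2) a b)"
      using convex_W[of "1/2" a b] a0 b0 ab by simp
  next
    fix x :: "real^('n+unit)" assume x: "x \<in> Omega"
    have bb: "b = 1 - a" using ab by simp
    have "det (hessian (W (1/2) a b) x) = (2*(1/2)*b*(xlast x powr a)*(ss x powr b)/ss x) ^ CARD('n) * ((1/2)*a*b*(xlast x powr a)*(ss x powr b)/(xlast x)^2)"
      by (rule det_hess[OF x bb])
    also have "\<dots> \<le> \<bar>(1/2) * xlast x - (1/2) * xlast x powr a * ss x powr b\<bar> powr (-p)"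
      using final_ineq[of "xlast x" "ss x" p "CARD('n)"] Omega_D[OF x] assms m1
      unfolding a_def b_def n_def by simp
    also have "\<dots> = \<bar>W (1/2) a b x\<bar> powr (-p)" by (simp add: W_def)
    finally show "det (hessian (W (1/2) a b) x) \<le> \<bar>W (1/2) a b x\<bar> powr (-p)" .
  next
    fix x :: "real^('n+unit)" assume "x \<in> frontier (Omega :: (real ^ ('n + unit)) set)"
    then show "W (1/2) a b x = 0" using frontier_W ab by blast
  qed
  show "(1/2::real) > 0" by simp
  show "let n = real (CARD('n) + 1);
             w = (\<lambda>x::real ^ ('n + unit). (1/2) * xlast x
                    - (1/2) * (xlast x) powr (2 / (n + p))
                        * (1 - (norm (xprime x))\<^sup>2) powr ((n + p - 2) / (n + p)))
           in smooth_on (Omega :: (real ^ ('n + unit)) set) w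
            \<and> convex_on (Omega :: (real ^ ('n + unit)) set) w
            \<and> (\<forall>x\<in>(Omega :: (real ^ ('n + unit)) set). det (hessian w x) \<le> \<bar>w x\<bar> powr (- p))
            \<and> (\<forall>x\<in>frontier (Omega :: (real ^ ('n + unit)) set). w x = 0)"
  proof -
    have weqx: "(1/2) * xlast x - (1/2) * xlast x powr (2 / (real (CARD('n) + 1) + p))
                        * (1 - (norm (xprime x))\<^sup>2) powr ((real (CARD('n) + 1) + p - 2) / (real (CARD('n) + 1) + p))
        = W (1/2) a b x" for x :: "real^('n+unit)"
      by (simp add: W_def ss_def a_def b_def n_def)
    show ?thesis unfolding Let_def using main by (simp only: weqx) blast
  qed
qed

end
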